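(* Let $g\ge1$, $A=\begin{pmatrix}0&0\\1&0\end{pmatrix}$, $\mathcal M_A=\{X(\lambda)=\lambda^{g+1}A+\sum_{i=0}^g\lambda^iX_i\mid X_i\in\mathfrak{sl}(2)\}$ with the compatible Poisson tensors $P_0,P_1$ of the context, and $P_\lambda=P_1-\lambda P_0$. Let $H(\lambda)=\tfrac12\mathrm{Tr}\,X(\lambda)^2=\sum_{i=0}^{2g+1}H_i\lambda^i$. Then $H(\lambda)$ is a Casimir of the Poisson pencil, i.e. $P_\lambda\,dH(\lambda)=0$ identically in $\lambda$; in particular $P_0dH_{i-1}=P_1dH_i$ for all $i\ge1$. Moreover, for each $i$ with $1\le i\le 2g+1$, the bi-Hamiltonian vector field $Y_{g-i}:=P_0\,dH_{i-1}=P_1\,dH_i$ has the Lax representation $$\frac{dX(\lambda)}{dt}=\big[(\lambda^{-i}X(\lambda))_+,X(\lambda)\big],$$ where $(\cdot)_+$ denotes the projection onto nonnegative powers of $\lambda$.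
   Context: Tangent and cotangent spaces of $\mathcal M_A\cong\mathfrak{sl}(2)^{g+1}$ are identified with $\mathfrak{sl}(2)^{g+1}$ via the pairing $\langle(V_i),(W_i)\rangle=\sum_{i=0}^g\mathrm{Tr}(V_iW_i)$, and $dF=(\partial F/\partial X_0,\dots,\partial F/\partial X_g)$. Put $X_{g+1}:=A$ and $X_m:=0$ for $m>g+1$. $P_0:(W_0,\dots,W_g)\mapsto(\dot X_i)$ with $\dot X_i=\sum_{j=0}^{g-i}[X_{i+j+1},W_j]$; $P_1:(W_0,\dots,W_g)\mapsto(\dot X_i)$ with $\dot X_0=-[X_0,W_0]$ and $\dot X_i=\sum_{j=1}^{g+1-i}[X_{i+j},W_j]$ for $1\le i\le g$. Note $\tfrac12\mathrm{Tr}A^2=0$, so $H(\lambda)$ has degree at most $2g+1$ in $\lambda$. *)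

theory Defs
  imports "HOL-Analysis.Analysis"
begin

type_synonym cmat = "complex^2^2"

definition sl2 :: "cmat \<Rightarrow> bool" where
  "sl2 M \<longleftrightarrow> trace M = 0"

definition Amat :: cmat where
  "Amat = (\<chi> i j. if i = 2 \<and> j = 1 then 1 else 0)"

definition smat :: "complex \<Rightarrow> cmat \<Rightarrow> cmat" where
  "smat c M = (\<chi> i j. c * M$i$j)"

definition brk :: "cmat \<Rightarrow> cmat \<Rightarrow> cmat" where
  "brk M N = M ** N - N ** M"

text \<open>A point of M_A is given by X 0, ..., X g in sl(2); only these entries matter.\<close>
definition in_MA :: "nat \<Rightarrow> (nat \<Rightarrow> cmat) \<Rightarrow> bool" where
  "in_MA g X \<longleftrightarrow> (\<forall>i\<le>g. sl2 (X i))"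

definition Xf :: "nat \<Rightarrow> (nat \<Rightarrow> cmat) \<Rightarrow> nat \<Rightarrow> cmat" where
  "Xf g X i = (if i \<le> g then X i else if i = g + 1 then Amat else 0)"

definition Xlam :: "nat \<Rightarrow> (nat \<Rightarrow> cmat) \<Rightarrow> complex \<Rightarrow> cmat" where
  "Xlam g X l = (\<Sum>i\<le>g+1. smat (l ^ i) (Xf g X i))"

definition Hlam :: "nat \<Rightarrow> (nat \<Rightarrow> cmat) \<Rightarrow> complex \<Rightarrow> complex" where
  "Hlam g X l = trace (Xlam g X l ** Xlam g X l) / 2"

text \<open>H_k = coefficient of l^k in (1/2) Tr X(l)^2.\<close>
definition Hcoef :: "nat \<Rightarrow> nat \<Rightarrow> (nat \<Rightarrow> cmat) \<Rightarrow> complex" where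
  "Hcoef g k X = (\<Sum>a\<le>k. trace (Xf g X a ** Xf g X (k - a))) / 2"

text \<open>Tangent/cotangent vectors: elements of sl(2)^(g+1), padded by zeros.\<close>
definition tangent :: "nat \<Rightarrow> (nat \<Rightarrow> cmat) \<Rightarrow> bool" where
  "tangent g V \<longleftrightarrow> (\<forall>i\<le>g. sl2 (V i)) \<and> (\<forall>i>g. V i = 0)"

definition pair :: "nat \<Rightarrow> (nat \<Rightarrow> cmat) \<Rightarrow> (nat \<Rightarrow> cmat) \<Rightarrow> complex" where
  "pair g V W = (\<Sum>i\<le>g. trace (V i ** W i))"

text \<open>W is the differential dF at X, identified with sl(2)^(g+1) via the trace pairing.\<close>
definition is_grad :: "nat \<Rightarrow> ((nat \<Rightarrow> cmat) \<Rightarrow> complex) \<Rightarrow> (nat \<Rightarrow> cmat) \<Rightarrow> (nat \<Rightarrow> cmat) \<Rightarrow> bool" where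
  "is_grad g F X W \<longleftrightarrow> tangent g W \<and>
     (\<forall>V. tangent g V \<longrightarrow>
        ((\<lambda>e. F (\<lambda>j. X j + smat e (V j))) has_field_derivative pair g W V) (at 0))"

definition grad :: "nat \<Rightarrow> ((nat \<Rightarrow> cmat) \<Rightarrow> complex) \<Rightarrow> (nat \<Rightarrow> cmat) \<Rightarrow> (nat \<Rightarrow> cmat)" where
  "grad g F X = (THE W. is_grad g F X W)"

definition P0 :: "nat \<Rightarrow> (nat \<Rightarrow> cmat) \<Rightarrow> (nat \<Rightarrow> cmat) \<Rightarrow> (nat \<Rightarrow> cmat)" where
  "P0 g X W = (\<lambda>i. if i \<le> g then (\<Sum>j\<le>g - i. brk (Xf g X (i + j + 1)) (W j)) else 0)"

definition P1 :: "nat \<Rightarrow> (nat \<Rightarrow> cmat) \<Rightarrow> (nat \<Rightarrow> cmat) \<Rightarrow> (nat \<Rightarrow> cmat)" where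
  "P1 g X W = (\<lambda>i. if i = 0 then - brk (X 0) (W 0)
                  else if i \<le> g then (\<Sum>j\<in>{1..g + 1 - i}. brk (Xf g X (i + j)) (W j))
                  else 0)"

text \<open>(l^(-i) X(l))_+ : the part with nonnegative powers of l.\<close>
definition plus_part :: "nat \<Rightarrow> nat \<Rightarrow> (nat \<Rightarrow> cmat) \<Rightarrow> complex \<Rightarrow> cmat" where
  "plus_part g i X l = (\<Sum>k\<in>{i..g+1}. smat (l ^ (k - i)) (Xf g X k))"

end

theory Submission
  imports Defs
begin


lemma smat_add: "smat c (M + N) = smat c M + smat c N"
  by (simp add: smat_def vec_eq_iff algebra_simps)
lemma smat_add2: "smat (c + d) M = smat c M + smat d M"
  by (simp add: smat_def vec_eq_iff algebra_simps)
lemma smat_diff: "smat c (M - N) = smat c M - smat c N"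
  by (simp add: smat_def vec_eq_iff algebra_simps)
lemma smat_minus: "smat c (- M) = - smat c M"
  by (simp add: smat_def vec_eq_iff algebra_simps)
lemma smat_smat: "smat c (smat d M) = smat (c * d) M"
  by (simp add: smat_def vec_eq_iff algebra_simps)
lemma smat_zero[simp]: "smat c 0 = 0"
  by (simp add: smat_def vec_eq_iff)
lemma smat_0[simp]: "smat 0 M = 0"
  by (simp add: smat_def vec_eq_iff)
lemma smat_1[simp]: "smat 1 M = M"
  by (simp add: smat_def vec_eq_iff)
lemma smat_sum: "smat c (sum f S) = (\<Sum>i\<in>S. smat c (f i))"
  by (induction S rule: infinite_finite_induct) (auto simp: smat_add)
lemma mult_smat_l: "smat c M ** N = smat c (M ** N)"
  by (simp add: smat_def vec_eq_iff matrix_matrix_mult_def sum_distrib_left algebra_simps)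
lemma mult_smat_r: "M ** smat c N = smat c (M ** N)"
  by (simp add: smat_def vec_eq_iff matrix_matrix_mult_def sum_distrib_left algebra_simps)
lemma madd_r: "((M::cmat) + N) ** P = M ** P + N ** P"
  by (simp add: matrix_matrix_mult_def vec_eq_iff algebra_simps sum.distrib)
lemma madd_l: "(P::cmat) ** (M + N) = P ** M + P ** N"
  by (simp add: matrix_matrix_mult_def vec_eq_iff algebra_simps sum.distrib)
lemma msub_r: "((M::cmat) - N) ** P = M ** P - N ** P"
  by (simp add: matrix_matrix_mult_def vec_eq_iff algebra_simps sum_subtractf)
lemma msub_l: "(P::cmat) ** (M - N) = P ** M - P ** N"
  by (simp add: matrix_matrix_mult_def vec_eq_iff algebra_simps sum_subtractf)
lemma mult_sum_l: "(sum (f::_\<Rightarrow>cmat) S) ** (N::cmat) = (\<Sum>i\<in>S. f i ** N)"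
  by (induction S rule: infinite_finite_induct) (auto simp: madd_r)
lemma mult_sum_r: "(N::cmat) ** (sum (f::_\<Rightarrow>cmat) S) = (\<Sum>i\<in>S. N ** f i)"
  by (induction S rule: infinite_finite_induct) (auto simp: madd_l)
lemma trace_smat: "trace (smat c M) = c * trace M"
  by (simp add: smat_def trace_def sum_distrib_left)
lemma trace_zero[simp]: "trace (0::cmat) = 0"
  by (simp add: trace_def)
lemma trace_sum: "trace (sum f S :: cmat) = (\<Sum>i\<in>S. trace (f i))"
  by (induction S rule: infinite_finite_induct) (auto simp: trace_add)
lemma brk_add_l: "brk (M + N) P = brk M P + brk N P"
  by (simp add: brk_def madd_r madd_l)
lemma brk_add_r: "brk P (M + N) = brk P M + brk P N"
  by (simp add: brk_def madd_r madd_l)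
lemma brk_diff_l: "brk (M - N) P = brk M P - brk N P"
  by (simp add: brk_def msub_r msub_l)
lemma brk_zero_l[simp]: "brk 0 P = 0" by (simp add: brk_def)
lemma brk_zero_r[simp]: "brk P 0 = 0" by (simp add: brk_def)
lemma brk_self[simp]: "brk P P = 0" by (simp add: brk_def)
lemma brk_anti: "brk M N = - brk N M" by (simp add: brk_def)
lemma brk_smat_l: "brk (smat c M) N = smat c (brk M N)"
  by (simp add: brk_def mult_smat_l mult_smat_r smat_diff)
lemma brk_smat_r: "brk N (smat c M) = smat c (brk N M)"
  by (simp add: brk_def mult_smat_l mult_smat_r smat_diff)
lemma brk_sum_l: "brk (sum f S) N = (\<Sum>i\<in>S. brk (f i) N)"
  by (induction S rule: infinite_finite_induct) (auto simp: brk_add_l)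
lemma brk_sum_r: "brk N (sum f S) = (\<Sum>i\<in>S. brk N (f i))"
  by (induction S rule: infinite_finite_induct) (auto simp: brk_add_r)
lemma sum_smat: "smat (sum f S) M = (\<Sum>i\<in>S. smat (f i) M)"
  by (induction S rule: infinite_finite_induct) (auto simp: smat_add2)

lemma Xf_sl2: "in_MA g X \<Longrightarrow> trace (Xf g X i) = 0"
  by (auto simp: Xf_def in_MA_def sl2_def Amat_def trace_def sum_2)

lemma Xf_big: "i > g + 1 \<Longrightarrow> Xf g X i = 0"
  by (simp add: Xf_def)

lemma cpx_aux: "(a::complex) - b = c - d \<Longrightarrow> a + b = 0 \<Longrightarrow> c + d = 0 \<Longrightarrow> a = c \<and> b = d"
proof -
  assume h: "a - b = c - d" "a + b = 0" "c + d = 0"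
  then have "b = -a" "d = -c" by (simp_all add: eq_neg_iff_add_eq_0 add.commute)
  then show ?thesis using h(1) by auto
qed

lemma sl2_eq:
  fixes M N :: cmat
  assumes "trace M = 0" "trace N = 0" "\<And>E. trace E = 0 \<Longrightarrow> trace (M ** E) = trace (N ** E)"
  shows "M = N"
proof -
  define E1 :: cmat where "E1 = (\<chi> i j. if i = 1 \<and> j = 2 then 1 else 0)"
  define E2 :: cmat where "E2 = (\<chi> i j. if i = 2 \<and> j = 1 then 1 else 0)"
  define E3 :: cmat where "E3 = (\<chi> i j. if i = j then (if i = 1 then 1 else -1) else 0)"
  have "trace E1 = 0" "trace E2 = 0" "trace E3 = 0"
    by (simp_all add: E1_def E2_def E3_def trace_def sum_2)
  then have h: "trace (M ** E1) = trace (N ** E1)" "trace (M ** E2) = trace (N ** E2)"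
    "trace (M ** E3) = trace (N ** E3)" using assms(3) by auto
  then show ?thesis using assms(1,2)
    apply (auto simp: E1_def E2_def E3_def trace_def sum_2 matrix_matrix_mult_def vec_eq_iff forall_2)
    using cpx_aux by blast+
qed



lemma pair_single:
  assumes "i \<le> g"
  shows "pair g W (\<lambda>j. if j = i then E else 0) = trace (W i ** E)"
proof -
  have "pair g W (\<lambda>j. if j = i then E else 0) = (\<Sum>j\<le>g. if j = i then trace (W i ** E) else 0)"
    unfolding pair_def by (rule sum.cong) (auto simp: matrix_matrix_mult_def trace_def)
  also have "\<dots> = trace (W i ** E)" using assms by simp
  finally show ?thesis .
qed

lemma grad_unique:
  assumes "is_grad g F X W" "is_grad g F X W'"
  shows "W = W'"
proof
  fix i
  show "W i = W' i"
  proof (cases "i \<le> g")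
    case False
    then show ?thesis using assms by (auto simp: is_grad_def tangent_def)
  next
    case True
    have tr: "trace (W i) = 0" "trace (W' i) = 0" using assms True by (auto simp: is_grad_def tangent_def sl2_def)
    show ?thesis
    proof (rule sl2_eq[OF tr])
      fix E :: cmat assume E: "trace E = 0"
      let ?V = "\<lambda>j. if j = i then E else (0::cmat)"
      have tV: "tangent g ?V" using E True by (auto simp: tangent_def sl2_def)
      have d1: "((\<lambda>e. F (\<lambda>j. X j + smat e (?V j))) has_field_derivative pair g W ?V) (at 0)"
        using assms(1) tV by (auto simp: is_grad_def)
      have d2: "((\<lambda>e. F (\<lambda>j. X j + smat e (?V j))) has_field_derivative pair g W' ?V) (at 0)"
        using assms(2) tV by (auto simp: is_grad_def)
      have "pair g W ?V = pair g W' ?V" using DERIV_unique[OF d1 d2] .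
      then show "trace (W i ** E) = trace (W' i ** E)" using pair_single[OF True] by metis
    qed
  qed
qed

lemma grad_eq: "is_grad g F X W \<Longrightarrow> grad g F X = W"
  unfolding grad_def using grad_unique by blast

lemma quad_deriv:
  assumes "\<And>e. F e = c0 + e * c1 + e^2 * c2"
  shows "(F has_field_derivative c1) (at (0::complex))"
proof -
  have "F = (\<lambda>e. c0 + e * c1 + e^2 * c2)" using assms by auto
  moreover have "((\<lambda>e. c0 + e * c1 + e^2 * c2) has_field_derivative c1) (at (0::complex))"
    by (auto intro!: derivative_eq_intros)
  ultimately show ?thesis by simp
qed

lemma Xf_pert:
  "Xf g (\<lambda>j. X j + smat e (V j)) a = Xf g X a + smat e (if a \<le> g then V a else 0)"
  by (simp add: Xf_def)

lemma trace_quad: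
  fixes P Q R S :: cmat
  shows "trace ((P + smat e Q) ** (R + smat e S)) =
     trace (P ** R) + e * (trace (P ** S) + trace (Q ** R)) + e^2 * trace (Q ** S)"
  by (simp add: madd_l madd_r mult_smat_l mult_smat_r smat_smat trace_add trace_smat
      power2_eq_square algebra_simps)



lemma Xlam_trace: "in_MA g X \<Longrightarrow> trace (Xlam g X l) = 0"
  by (simp add: Xlam_def trace_sum trace_smat Xf_sl2 del: sum.atMost_Suc)

lemma grad_H:
  assumes "in_MA g X"
  shows "grad g (\<lambda>Y. Hlam g Y l) X = (\<lambda>j. if j \<le> g then smat (l^j) (Xlam g X l) else 0)"
proof (rule grad_eq)
  let ?XL = "Xlam g X l"
  let ?W = "\<lambda>j. if j \<le> g then smat (l^j) (Xlam g X l) else 0"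
  show "is_grad g (\<lambda>Y. Hlam g Y l) X ?W"
    unfolding is_grad_def
  proof (intro conjI allI impI)
    show "tangent g ?W" using Xlam_trace[OF assms] by (auto simp: tangent_def sl2_def trace_smat)
  next
    fix V assume tV: "tangent g V"
    define Vp where "Vp a = (if a \<le> g then V a else 0)" for a
    define VL where "VL = (\<Sum>a\<le>g+1. smat (l^a) (Vp a))"
    have XL: "Xlam g (\<lambda>j. X j + smat e (V j)) l = ?XL + smat e VL" for e
      unfolding Xlam_def Xf_pert VL_def
      by (simp add: smat_add sum.distrib smat_sum smat_smat mult.commute Vp_def)
    have H: "Hlam g (\<lambda>j. X j + smat e (V j)) l =
       trace (?XL ** ?XL)/2 + e * ((trace (?XL ** VL) + trace (VL ** ?XL))/2) + e^2 * (trace (VL ** VL)/2)" for e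
      unfolding Hlam_def XL trace_quad by (simp add: field_simps)
    have "trace (VL ** ?XL) = trace (?XL ** VL)" by (rule trace_mul_sym)
    moreover have "trace (?XL ** VL) = pair g ?W V"
    proof -
      have "trace (?XL ** VL) = (\<Sum>a\<le>g+1. l^a * trace (?XL ** Vp a))"
        unfolding VL_def by (simp add: mult_sum_r trace_sum mult_smat_r trace_smat del: sum.atMost_Suc)
      also have "\<dots> = (\<Sum>a\<le>g. l^a * trace (?XL ** V a))"
        by (simp add: Vp_def matrix_matrix_mult_def trace_def)
      also have "\<dots> = pair g ?W V"
        unfolding pair_def by (rule sum.cong) (auto simp: mult_smat_l trace_smat)
      finally show ?thesis .
    qed
    ultimately show "((\<lambda>e. Hlam g (\<lambda>j. X j + smat e (V j)) l) has_field_derivative pair g ?W V) (at 0)"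
      using quad_deriv[OF H] by simp
  qed
qed



lemma grad_Hc:
  assumes "in_MA g X"
  shows "grad g (Hcoef g k) X = (\<lambda>a. if a \<le> g \<and> a \<le> k then Xf g X (k - a) else 0)"
proof (rule grad_eq)
  let ?W = "\<lambda>a. if a \<le> g \<and> a \<le> k then Xf g X (k - a) else 0"
  show "is_grad g (Hcoef g k) X ?W"
    unfolding is_grad_def
  proof (intro conjI allI impI)
    show "tangent g ?W" using Xf_sl2[OF assms] by (auto simp: tangent_def sl2_def)
  next
    fix V assume tV: "tangent g V"
    define Vp where "Vp a = (if a \<le> g then V a else 0)" for a
    define c1 where "c1 = (\<Sum>a\<le>k. trace (Xf g X a ** Vp (k-a)) + trace (Vp a ** Xf g X (k - a)))/2"
    have H: "Hcoef g k (\<lambda>j. X j + smat e (V j)) =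
       (\<Sum>a\<le>k. trace (Xf g X a ** Xf g X (k-a)))/2 + e * c1 +
        e^2 * ((\<Sum>a\<le>k. trace (Vp a ** Vp (k-a)))/2)" for e
    proof -
      have xf: "Xf g (\<lambda>j. X j + smat e (V j)) a = Xf g X a + smat e (Vp a)" for a
        by (simp add: Xf_pert Vp_def)
      have "(\<Sum>a\<le>k. trace (Xf g (\<lambda>j. X j + smat e (V j)) a ** Xf g (\<lambda>j. X j + smat e (V j)) (k-a)))
         = (\<Sum>a\<le>k. trace (Xf g X a ** Xf g X (k-a)) + e * (trace (Xf g X a ** Vp (k-a)) + trace (Vp a ** Xf g X (k - a)))
              + e^2 * trace (Vp a ** Vp (k-a)))"
        unfolding xf trace_quad by simp
      also have "\<dots> = (\<Sum>a\<le>k. trace (Xf g X a ** Xf g X (k-a))) + e * (\<Sum>a\<le>k. trace (Xf g X a ** Vp (k-a)) + trace (Vp a ** Xf g X (k - a)))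
              + e^2 * (\<Sum>a\<le>k. trace (Vp a ** Vp (k-a)))"
        by (simp add: sum.distrib sum_distrib_left distrib_left)
      finally show ?thesis unfolding Hcoef_def c1_def by (simp add: field_simps)
    qed
    have r: "(\<Sum>a\<le>k. trace (Xf g X a ** Vp (k-a))) = (\<Sum>a\<le>k. trace (Xf g X (k-a) ** Vp a))"
    proof -
      have "(\<Sum>a\<in>{0..k}. trace (Xf g X a ** Vp (k-a))) = (\<Sum>a\<in>{0..k}. trace (Xf g X (k + 0 - a) ** Vp (k-(k + 0 - a))))"
        by (rule sum.atLeastAtMost_rev)
      also have "\<dots> = (\<Sum>a\<in>{0..k}. trace (Xf g X (k-a) ** Vp a))"
        by (rule sum.cong) auto
      finally show ?thesis by (simp only: atLeast0AtMost)
    qed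
    have s: "(\<Sum>a\<le>k. trace (Vp a ** Xf g X (k - a))) = (\<Sum>a\<le>k. trace (Xf g X (k-a) ** Vp a))"
      by (rule sum.cong[OF refl], rule trace_mul_sym)
    have "c1 = (\<Sum>a\<le>k. trace (Xf g X (k-a) ** Vp a))"
      unfolding c1_def sum.distrib r s by (simp add: field_simps)
    also have "\<dots> = (\<Sum>a\<le>k. if a \<in> {..g} then trace (Xf g X (k-a) ** V a) else 0)"
      by (rule sum.cong) (auto simp: Vp_def matrix_matrix_mult_def trace_def)
    also have "\<dots> = (\<Sum>a\<in>{..k} \<inter> {..g}. trace (Xf g X (k-a) ** V a))"
      by (rule sum.inter_restrict[symmetric]) simp
    also have "\<dots> = (\<Sum>a\<in>{..g} \<inter> {..k}. trace (Xf g X (k-a) ** V a))"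
      by (simp add: Int_commute)
    also have "\<dots> = (\<Sum>a\<le>g. if a \<in> {..k} then trace (Xf g X (k-a) ** V a) else 0)"
      by (rule sum.inter_restrict) simp
    also have "\<dots> = pair g ?W V"
      unfolding pair_def by (rule sum.cong) (auto simp: matrix_matrix_mult_def trace_def)
    finally have "c1 = pair g ?W V" .
    then show "((\<lambda>e. Hcoef g k (\<lambda>j. X j + smat e (V j))) has_field_derivative pair g ?W V) (at 0)"
      using quad_deriv[OF H] by simp
  qed
qed



lemma part2:
  fixes l :: complex
  assumes "in_MA g X"
  defines "W \<equiv> (\<lambda>j. if j \<le> g then smat (l^j) (Xlam g X l) else 0)"
  shows "P1 g X W i - smat l (P0 g X W i) = 0"
proof -
  let ?XL = "Xlam g X l"
  consider "i = 0" | "1 \<le> i \<and> i \<le> g" | "i > g" by linarith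
  then show ?thesis
  proof cases
    case 1
    have "smat l (P0 g X W 0) = (\<Sum>j\<le>g. brk (smat (l^Suc j) (Xf g X (Suc j))) ?XL)"
      unfolding P0_def W_def
      by (simp add: smat_sum brk_smat_l brk_smat_r smat_smat brk_anti[of ?XL] smat_minus mult.commute)
    also have "\<dots> = brk (\<Sum>j\<le>g. smat (l^Suc j) (Xf g X (Suc j))) ?XL"
      by (simp add: brk_sum_l)
    also have "(\<Sum>j\<le>g. smat (l^Suc j) (Xf g X (Suc j))) = ?XL - X 0"
      unfolding Xlam_def by (simp add: sum.atMost_Suc_shift Xf_def del: sum.atMost_Suc)
    finally have "smat l (P0 g X W 0) = - brk (X 0) ?XL"
      by (simp add: brk_diff_l)
    moreover have "P1 g X W 0 = - brk (X 0) ?XL" by (simp add: P1_def W_def)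
    ultimately show ?thesis using 1 by simp
  next
    case 2
    have "smat l (P0 g X W i) = (\<Sum>j\<in>{0..g-i}. brk (Xf g X (i + Suc j)) (smat (l^Suc j) ?XL))"
      unfolding P0_def W_def using 2
      by (auto simp: smat_sum brk_smat_r smat_smat atLeast0AtMost intro!: sum.cong)
    moreover have "P1 g X W i = (\<Sum>j\<in>{0..g-i}. brk (Xf g X (i + Suc j)) (smat (l^Suc j) ?XL))"
    proof -
      have "P1 g X W i = (\<Sum>j\<in>{Suc 0..Suc (g-i)}. brk (Xf g X (i + j)) (W j))"
        unfolding P1_def using 2 by (simp add: Suc_diff_le)
      also have "\<dots> = (\<Sum>j\<in>{0..g-i}. brk (Xf g X (i + Suc j)) (W (Suc j)))"
        by (rule sum.shift_bounds_cl_Suc_ivl)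
      also have "\<dots> = (\<Sum>j\<in>{0..g-i}. brk (Xf g X (i + Suc j)) (smat (l^Suc j) ?XL))"
        using 2 by (intro sum.cong) (auto simp: W_def)
      finally show ?thesis .
    qed
    ultimately show ?thesis by simp
  next
    case 3
    then show ?thesis by (simp add: P0_def P1_def)
  qed
qed



lemma box_tri:
  fixes f :: "nat \<Rightarrow> nat \<Rightarrow> 'a::comm_monoid_add"
  assumes "\<And>a b. f a b \<noteq> 0 \<Longrightarrow> a \<le> M \<and> b \<le> M \<and> a + b < K"
  shows "(\<Sum>a\<le>M. \<Sum>b\<le>M. f a b) = (\<Sum>n<K. \<Sum>a\<le>n. f a (n - a))"
proof -
  let ?B = "{..M} \<times> {..M}"
  let ?T = "{(i,j). i + j < K}"
  have fT: "finite ?T" by (rule finite_subset[of _ "{..<K} \<times> {..<K}"]) auto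
  have "(\<Sum>a\<le>M. \<Sum>b\<le>M. f a b) = (\<Sum>(a,b)\<in>?B. f a b)" by (rule sum.cartesian_product)
  also have "\<dots> = (\<Sum>(a,b)\<in>?B \<inter> ?T. f a b)"
    by (rule sum.mono_neutral_right) (auto dest: assms)
  also have "\<dots> = (\<Sum>(a,b)\<in>?T. f a b)"
    using fT by (intro sum.mono_neutral_left) (auto dest: assms)
  also have "\<dots> = (\<Sum>n<K. \<Sum>a\<le>n. f a (n - a))" by (rule sum.triangle_reindex)
  finally show ?thesis .
qed

lemma self_neg_zero: "(S::cmat) = - S \<Longrightarrow> S = 0"
  by (auto simp: vec_eq_iff)

lemma add0_aux: "(x::cmat) + y = 0 \<Longrightarrow> z = - x \<Longrightarrow> y = z"
  by (metis add.commute add_eq_0_iff)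

lemma asym_sum0:
  fixes f :: "nat \<Rightarrow> nat \<Rightarrow> cmat"
  assumes "\<And>k p. f k p = - f p k"
  shows "(\<Sum>k\<in>{0..<Suc N}. f k (N - k)) = 0"
proof -
  have "(\<Sum>k\<in>{0..<Suc N}. f k (N - k)) = (\<Sum>k\<in>{0..<Suc N}. f (Suc N + 0 - Suc k) (N - (Suc N + 0 - Suc k)))"
    by (rule sum.atLeastLessThan_rev)
  also have "\<dots> = (\<Sum>k\<in>{0..<Suc N}. - f k (N - k))"
    by (rule sum.cong) (auto simp: assms[of "N - _"])
  also have "\<dots> = - (\<Sum>k\<in>{0..<Suc N}. f k (N - k))" by (simp add: sum_negf)
  finally show ?thesis by (rule self_neg_zero)
qed

lemma Fsym:
  fixes f :: "nat \<Rightarrow> nat \<Rightarrow> cmat"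
  assumes "\<And>k p. f k p = - f p k" and "a \<le> Suc N"
  shows "(\<Sum>k\<in>{a..<Suc N}. f k (N - k)) = (\<Sum>k\<in>{Suc N - a..<Suc N}. f k (N - k))"
proof -
  have split: "(\<Sum>k\<in>{0..<a}. f k (N - k)) + (\<Sum>k\<in>{a..<Suc N}. f k (N - k)) = 0"
    using sum.atLeastLessThan_concat[of 0 a "Suc N" "\<lambda>k. f k (N - k)"] asym_sum0[OF assms(1)] assms(2)
    by simp
  have "(\<Sum>k\<in>{Suc N - a..<Suc N}. f k (N - k)) = (\<Sum>k\<in>{0..<a}. f (N - k) (N - (N - k)))"
    using assms(2)
    by (intro sum.reindex_bij_witness[where i="\<lambda>k. N - k" and j="\<lambda>k. N - k"]) auto
  also have "\<dots> = (\<Sum>k\<in>{0..<a}. - f k (N - k))"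
    using assms(2) by (intro sum.cong) (auto simp: assms(1)[of "N - _"])
  also have "\<dots> = - (\<Sum>k\<in>{0..<a}. f k (N - k))" by (simp add: sum_negf)
  finally show ?thesis using add0_aux[OF split] by blast
qed



definition Gr :: "nat \<Rightarrow> (nat \<Rightarrow> cmat) \<Rightarrow> nat \<Rightarrow> nat \<Rightarrow> cmat" where
  "Gr g X k = (\<lambda>a. if a \<le> g \<and> a \<le> k then Xf g X (k - a) else 0)"

lemma brk_Xf_anti: "brk (Xf g X k) (Xf g X p) = - brk (Xf g X p) (Xf g X k)"
  by (rule brk_anti)

lemma P0_coef:
  assumes "1 \<le> i" "n \<le> g"
  shows "P0 g X (Gr g X (i - 1)) n = (\<Sum>k\<in>{Suc n..<Suc (n + i)}. brk (Xf g X k) (Xf g X (n + i - k)))"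
proof -
  let ?h = "\<lambda>j. brk (Xf g X (n + j + 1)) (Xf g X (i - 1 - j))"
  have "P0 g X (Gr g X (i - 1)) n = (\<Sum>j\<le>g - n. if j \<in> {..<i} then ?h j else 0)"
    unfolding P0_def Gr_def using assms by (auto intro!: sum.cong)
  also have "\<dots> = (\<Sum>j\<in>{..g - n} \<inter> {..<i}. ?h j)"
    by (rule sum.inter_restrict[symmetric]) simp
  also have "\<dots> = (\<Sum>j\<in>{..<i}. ?h j)"
    by (rule sum.mono_neutral_left) (auto simp: Xf_def)
  also have "\<dots> = (\<Sum>j\<in>{0..<i}. brk (Xf g X (j + Suc n)) (Xf g X (n + i - (j + Suc n))))"
    using assms by (intro sum.cong) (auto simp: add.commute)
  also have "\<dots> = (\<Sum>k\<in>{0 + Suc n..<i + Suc n}. brk (Xf g X k) (Xf g X (n + i - k)))"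
    by (rule sum.shift_bounds_nat_ivl[symmetric])
  also have "{0 + Suc n..<i + Suc n} = {Suc n..<Suc (n + i)}" by (simp add: add.commute)
  finally show ?thesis .
qed

lemma part3:
  assumes "1 \<le> i"
  shows "P0 g X (Gr g X (i - 1)) = P1 g X (Gr g X i)"
proof
  fix m
  consider "m = 0" | "1 \<le> m \<and> m \<le> g" | "m > g" by linarith
  then show "P0 g X (Gr g X (i - 1)) m = P1 g X (Gr g X i) m"
  proof cases
    case 1
    have "P0 g X (Gr g X (i - 1)) m = (\<Sum>k\<in>{Suc 0..<Suc i}. brk (Xf g X k) (Xf g X (i - k)))"
      using P0_coef[OF assms, of 0] 1 by simp
    also have "\<dots> = (\<Sum>k\<in>{Suc i - Suc 0..<Suc i}. brk (Xf g X k) (Xf g X (i - k)))"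
      by (rule Fsym[of "\<lambda>k p. brk (Xf g X k) (Xf g X p)", OF brk_anti]) simp
    also have "\<dots> = brk (Xf g X i) (Xf g X 0)" by simp
    also have "\<dots> = - brk (X 0) (Xf g X i)"
    proof -
      have x0: "Xf g X 0 = X 0" by (simp add: Xf_def)
      show ?thesis using brk_anti[of "Xf g X i" "Xf g X 0"] by (simp only: x0)
    qed
    also have "\<dots> = P1 g X (Gr g X i) m" using 1 by (simp add: P1_def Gr_def Xf_def)
    finally show ?thesis .
  next
    case 2
    have "P1 g X (Gr g X i) m = (\<Sum>j\<in>{Suc 0..Suc (g-m)}. brk (Xf g X (m + j)) (Gr g X i j))"
      unfolding P1_def using 2 by (simp add: Suc_diff_le)
    also have "\<dots> = (\<Sum>j\<in>{0..g-m}. brk (Xf g X (m + Suc j)) (Gr g X i (Suc j)))"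
      by (rule sum.shift_bounds_cl_Suc_ivl)
    also have "\<dots> = (\<Sum>j\<in>{0..g-m}. brk (Xf g X (m + j + 1)) (Gr g X (i - 1) j))"
      using 2 assms by (intro sum.cong refl) (auto simp: Gr_def)
    also have "\<dots> = P0 g X (Gr g X (i - 1)) m"
      using 2 by (simp add: P0_def atLeast0AtMost)
    finally show ?thesis by simp
  next
    case 3
    then show ?thesis by (simp add: P0_def P1_def)
  qed
qed



lemma brk_sum_sum: "brk (sum f A) (sum h B) = (\<Sum>a\<in>A. \<Sum>b\<in>B. brk (f a) (h b))"
  unfolding brk_sum_l by (simp add: brk_sum_r)

lemma part4:
  fixes l :: complex
  assumes "1 \<le> i"
  shows "(\<Sum>k\<le>g. smat (l ^ k) (P0 g X (Gr g X (i - 1)) k)) = brk (plus_part g i X l) (Xlam g X l)"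
proof -
  define Bf where "Bf k p = brk (Xf g X k) (Xf g X p)" for k p
  define FF where "FF N a = (\<Sum>k\<in>{a..<Suc N}. Bf k (N - k))" for N a
  have Bf_anti: "Bf k p = - Bf p k" for k p unfolding Bf_def by (rule brk_anti)
  have Bf0: "Bf k p = 0" if "k > g + 1 \<or> p > g + 1" for k p
    using that unfolding Bf_def by (auto simp: Xf_big)
  have FFsym: "FF N a = FF N (Suc N - a)" if "a \<le> Suc N" for N a
    unfolding FF_def by (rule Fsym[OF Bf_anti that])
  have R1: "plus_part g i X l = (\<Sum>q\<le>g+1. smat (l^q) (Xf g X (q + i)))"
  proof -
    have "plus_part g i X l = (\<Sum>k\<in>{i..g+1+i}. smat (l ^ (k - i)) (Xf g X k))"
      unfolding plus_part_def by (rule sum.mono_neutral_left) (auto simp: Xf_big)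
    also have "\<dots> = (\<Sum>k\<in>{0+i..(g+1)+i}. smat (l ^ (k - i)) (Xf g X k))" by simp
    also have "\<dots> = (\<Sum>q\<in>{0..g+1}. smat (l ^ (q + i - i)) (Xf g X (q + i)))"
      by (rule sum.shift_bounds_cl_nat_ivl)
    finally show ?thesis by (simp add: atLeast0AtMost del: sum.atMost_Suc)
  qed
  have R2: "brk (plus_part g i X l) (Xlam g X l) = (\<Sum>q\<le>g+1. \<Sum>p\<le>g+1. smat (l^(q+p)) (Bf (q + i) p))"
    unfolding R1 Xlam_def Bf_def brk_sum_sum
    by (simp add: brk_smat_l brk_smat_r smat_smat power_add mult.commute del: sum.atMost_Suc)
  have R3: "(\<Sum>q\<le>g+1. \<Sum>p\<le>g+1. smat (l^(q+p)) (Bf (q + i) p)) =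
      (\<Sum>n<2*g+3. \<Sum>q\<le>n. smat (l^(q+(n-q))) (Bf (q + i) (n-q)))"
  proof (rule box_tri)
    fix q p assume ne: "smat (l^(q+p)) (Bf (q + i) p) \<noteq> 0"
    then have "q + i \<le> g + 1" "p \<le> g + 1" using Bf0 by (metis smat_zero not_le)+
    then show "q \<le> g + 1 \<and> p \<le> g + 1 \<and> q + p < 2 * g + 3" using assms by auto
  qed
  have R4: "(\<Sum>q\<le>n. smat (l^(q+(n-q))) (Bf (q + i) (n-q))) = smat (l^n) (FF (n+i) (Suc n))" for n
  proof -
    have "(\<Sum>q\<le>n. smat (l^(q+(n-q))) (Bf (q + i) (n-q))) = smat (l^n) (\<Sum>q\<in>{0..<Suc n}. Bf (q + i) ((n+i) - (q + i)))"
      by (auto simp: smat_sum atLeast0LessThan lessThan_Suc_atMost intro!: sum.cong)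
    also have "(\<Sum>q\<in>{0..<Suc n}. Bf (q + i) ((n+i) - (q + i))) = (\<Sum>k\<in>{0+i..<Suc n+i}. Bf k ((n+i) - k))"
      by (rule sum.shift_bounds_nat_ivl[symmetric])
    also have "\<dots> = FF (n+i) i" unfolding FF_def by (simp add: add.commute)
    also have "\<dots> = FF (n+i) (Suc (n+i) - i)" by (rule FFsym) simp
    also have "\<dots> = FF (n+i) (Suc n)" by (simp add: Suc_diff_le)
    finally show ?thesis .
  qed
  have L1: "(\<Sum>k\<le>g. smat (l ^ k) (P0 g X (Gr g X (i - 1)) k)) = (\<Sum>n\<le>g. smat (l^n) (FF (n+i) (Suc n)))"
  proof (intro sum.cong refl)
    fix n assume "n \<in> {..g}"
    then have "P0 g X (Gr g X (i - 1)) n = FF (n+i) (Suc n)"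
      unfolding FF_def Bf_def by (intro P0_coef[OF assms]) simp
    then show "smat (l ^ n) (P0 g X (Gr g X (i - 1)) n) = smat (l^n) (FF (n+i) (Suc n))" by simp
  qed
  have L2: "(\<Sum>n\<le>g. smat (l^n) (FF (n+i) (Suc n))) = (\<Sum>n<2*g+3. smat (l^n) (FF (n+i) (Suc n)))"
  proof (rule sum.mono_neutral_left)
    show "\<forall>n\<in>{..<2*g+3} - {..g}. smat (l^n) (FF (n+i) (Suc n)) = 0"
    proof
      fix n assume "n \<in> {..<2*g+3} - {..g}"
      then have "n > g" by auto
      then have "FF (n+i) (Suc n) = 0" unfolding FF_def by (intro sum.neutral) (auto intro: Bf0)
      then show "smat (l^n) (FF (n+i) (Suc n)) = 0" by simp
    qed
  qed auto
  show ?thesis unfolding L1 L2 R2 R3 R4 ..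
qed



lemma trace_AA: "trace (Amat ** Amat) = 0"
  by (simp add: Amat_def trace_def matrix_matrix_mult_def sum_2)

lemma mult_sum_sum: "(sum (f::_\<Rightarrow>cmat) A) ** (sum (h::_\<Rightarrow>cmat) B) = (\<Sum>a\<in>A. \<Sum>b\<in>B. f a ** h b)"
  unfolding mult_sum_l by (simp add: mult_sum_r)

lemma part1:
  fixes l :: complex
  shows "Hlam g X l = (\<Sum>i\<le>2*g+1. Hcoef g i X * l ^ i)"
proof -
  define T where "T a b = trace (Xf g X a ** Xf g X b)" for a b
  define T' where "T' a b = (if a = g+1 \<and> b = g+1 then 0 else T a b)" for a b
  have "trace (Xlam g X l ** Xlam g X l) = (\<Sum>a\<le>g+1. \<Sum>b\<le>g+1. l^(a+b) * T a b)"
    unfolding Xlam_def mult_sum_sum T_def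
    by (simp add: trace_sum mult_smat_l mult_smat_r smat_smat trace_smat power_add mult.commute del: sum.atMost_Suc)
  also have "\<dots> = (\<Sum>a\<le>g+1. \<Sum>b\<le>g+1. l^(a+b) * T' a b)"
    by (intro sum.cong refl) (auto simp: T'_def T_def Xf_def trace_AA)
  also have "\<dots> = (\<Sum>n<2*g+2. \<Sum>a\<le>n. l^(a+(n-a)) * T' a (n-a))"
  proof (rule box_tri)
    fix a b assume "l^(a+b) * T' a b \<noteq> 0"
    then have "T' a b \<noteq> 0" by auto
    then have tn: "trace (Xf g X a ** Xf g X b) \<noteq> 0" "\<not> (a = g+1 \<and> b = g+1)"
      by (auto simp: T'_def T_def split: if_splits)
    then have "Xf g X a \<noteq> 0" "Xf g X b \<noteq> 0"
      by (auto simp: matrix_matrix_mult_def trace_def)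
    then have "a \<le> g+1" "b \<le> g+1" using Xf_big not_le by metis+
    note this tn(2)
    then show "a \<le> g + 1 \<and> b \<le> g + 1 \<and> a + b < 2 * g + 2" by auto
  qed
  also have "\<dots> = (\<Sum>n<2*g+2. l^n * (\<Sum>a\<le>n. T a (n-a)))"
    by (intro sum.cong refl) (auto simp: T'_def sum_distrib_left intro!: sum.cong)
  also have "\<dots> = (\<Sum>n\<le>2*g+1. l^n * (2 * Hcoef g n X))"
    by (intro sum.cong) (auto simp: Hcoef_def T_def)
  finally have "trace (Xlam g X l ** Xlam g X l) = 2 * (\<Sum>n\<le>2*g+1. Hcoef g n X * l^n)"
    by (simp add: sum_distrib_left mult.commute mult.left_commute)
  then show ?thesis unfolding Hlam_def by simp
qed


theorem mainTheorem5:
  fixes g :: nat and X :: "nat \<Rightarrow> cmat"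
  assumes "g \<ge> 1" and "in_MA g X"
  shows "(\<forall>l. Hlam g X l = (\<Sum>i\<le>2*g+1. Hcoef g i X * l ^ i))
    \<and> (\<forall>l. \<forall>i. P1 g X (grad g (\<lambda>Y. Hlam g Y l) X) i
                 - smat l (P0 g X (grad g (\<lambda>Y. Hlam g Y l) X) i) = 0)
    \<and> (\<forall>i\<ge>1. P0 g X (grad g (Hcoef g (i - 1)) X) = P1 g X (grad g (Hcoef g i) X))
    \<and> (\<forall>i. 1 \<le> i \<and> i \<le> 2*g+1 \<longrightarrow>
         (\<forall>l. (\<Sum>k\<le>g. smat (l ^ k) (P0 g X (grad g (Hcoef g (i - 1)) X) k))
              = brk (plus_part g i X l) (Xlam g X l)))"
proof (intro conjI allI impI)
  fix l show "Hlam g X l = (\<Sum>i\<le>2*g+1. Hcoef g i X * l ^ i)" by (rule part1)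
next
  fix l i
  show "P1 g X (grad g (\<lambda>Y. Hlam g Y l) X) i - smat l (P0 g X (grad g (\<lambda>Y. Hlam g Y l) X) i) = 0"
    unfolding grad_H[OF assms(2)] by (rule part2[OF assms(2)])
next
  fix i :: nat assume "1 \<le> i"
  then show "P0 g X (grad g (Hcoef g (i - 1)) X) = P1 g X (grad g (Hcoef g i) X)"
    unfolding grad_Hc[OF assms(2)] Gr_def[symmetric] by (rule part3)
next
  fix i :: nat and l :: complex assume "1 \<le> i \<and> i \<le> 2*g+1"
  then show "(\<Sum>k\<le>g. smat (l ^ k) (P0 g X (grad g (Hcoef g (i - 1)) X) k)) = brk (plus_part g i X l) (Xlam g X l)"
    unfolding grad_Hc[OF assms(2)] Gr_def[symmetric] by (intro part4) simp
qed

end
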